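(* Let $\Gamma$ be a graph with $N$ edges. Then $\mathcal{T}(\Gamma)=\{(\mathbf{z},M\mathbf{a}):\ \mathbf{z}\in\Sigma(\Gamma),\ \mathbf{a}\in\mathbb{C}^{2N},\ U(\mathbf{z})\mathbf{a}=\mathbf{a}\}$.
   Context: $\Gamma$ is a finite graph with edges $e_1,\dots,e_N$, each oriented from $o(e_j)$ to $\tau(e_j)$; $\deg(v)$ counts edge-ends at $v$ (loops twice). For $\boldsymbol{\ell}\in\mathbb{R}_+^N$, $(\Gamma,\boldsymbol{\ell})$ has $e_j\cong[0,\ell_j]$ ($t=0$ at $o(e_j)$) and Laplacian $-d^2/dt^2$ with standard vertex conditions (continuity, and $\sum_{o(e_j)=v}f'|_{e_j}(0)-\sum_{\tau(e_j)=v}f'|_{e_j}(\ell_j)=0$). For an eigenfunction with eigenvalue $k^2$, $k>0$: $f|_{e_j}(t)=A_j\cos(kt)+B_j\sin(kt)=C_j\cos(k(\ell_j-t))+D_j\sin(k(\ell_j-t))$ and $\mathrm{tr}_k(f)=(A_1,\dots,A_N,C_1,\dots,C_N,B_1,\dots,B_N,D_1,\dots,D_N)$; for $k=0$, $f\equiv c$ gives $A_j=C_j=c$, $B_j=D_j=0$. $\mathcal{T}(\Gamma)=\{(\exp(ik\boldsymbol{\ell}),\mathrm{tr}_k(f)):\boldsymbol{\ell}\in\mathbb{R}_+^N,\ k^2\text{ eigenvalue},\ f\text{ in its eigenspace (including }0)\}\subset\mathbb{T}^N\times\mathbb{C}^{4N}$, with $\exp(ik\boldsymbol{\ell})=(e^{ik\ell_j})_j$;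 $\Sigma(\Gamma)$ is its projection to $\mathbb{T}^N$. Let $S$ be the real orthogonal $2N\times2N$ matrix acting on $\mathbf{a}=(a_1,\dots,a_N,b_1,\dots,b_N)$ by $(S\mathbf{a})_j=\frac{2}{\deg(o(e_j))}\big(\sum_{i:o(e_i)=o(e_j)}b_i+\sum_{i:\tau(e_i)=o(e_j)}a_i\big)-b_j$, $(S\mathbf{a})_{N+j}=\frac{2}{\deg(\tau(e_j))}\big(\sum_{i:o(e_i)=\tau(e_j)}b_i+\sum_{i:\tau(e_i)=\tau(e_j)}a_i\big)-a_j$; $U(\mathbf{z})=\mathrm{diag}(\mathbf{z},\mathbf{z})S$ where $\mathrm{diag}(\mathbf{z},\mathbf{z})$ has diagonal $(z_1,\dots,z_N,z_1,\dots,z_N)$. (With $f|_{e_j}(t)=a_je^{ik(t-\ell_j)}+b_je^{-ikt}$, $f$ is an eigenfunction with eigenvalue $k^2$ iff $U(\exp(ik\boldsymbol{\ell}))\mathbf{a}=\mathbf{a}$.) $J=\begin{pmatrix}0&I_N\\ I_N&0\end{pmatrix}$ and $M=\begin{pmatrix}S+J\\ i(S-J)\end{pmatrix}$, a $4N\times2N$ matrix. *)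

theory Defs
  imports "HOL-Analysis.Analysis"
begin

text \<open>A finite graph with edges e_0,...,e_(N-1) (0-based), edge j oriented from
  orig j to tm j; vertices of type 'v.  Vectors are complex lists.\<close>

definition gdeg :: "nat \<Rightarrow> (nat \<Rightarrow> 'v) \<Rightarrow> (nat \<Rightarrow> 'v) \<Rightarrow> 'v \<Rightarrow> nat" where
  "gdeg N orig tm v = card {j. j < N \<and> orig j = v} + card {j. j < N \<and> tm j = v}"

text \<open>Eigenfunction (possibly zero) of the standard Laplacian on (Gamma, l) with
  eigenvalue k^2: f j is the function on edge j \<cong> [0, l j], f' j its derivative.\<close>
definition is_eigfun ::
  "nat \<Rightarrow> (nat \<Rightarrow> 'v) \<Rightarrow> (nat \<Rightarrow> 'v) \<Rightarrow> (nat \<Rightarrow> real) \<Rightarrow> real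
   \<Rightarrow> (nat \<Rightarrow> real \<Rightarrow> complex) \<Rightarrow> (nat \<Rightarrow> real \<Rightarrow> complex) \<Rightarrow> bool" where
  "is_eigfun N orig tm l k f f' \<longleftrightarrow>
     (\<forall>j<N. \<forall>t\<in>{0..l j}.
        (f j has_vector_derivative f' j t) (at t within {0..l j}) \<and>
        (f' j has_vector_derivative (- complex_of_real (k\<^sup>2) * f j t)) (at t within {0..l j})) \<and>
     (\<exists>\<phi> :: 'v \<Rightarrow> complex. \<forall>j<N. f j 0 = \<phi> (orig j) \<and> f j (l j) = \<phi> (tm j)) \<and>
     (\<forall>v. (\<Sum>j | j < N \<and> orig j = v. f' j 0) - (\<Sum>j | j < N \<and> tm j = v. f' j (l j)) = 0)"

definition is_eigval ::
  "nat \<Rightarrow> (nat \<Rightarrow> 'v) \<Rightarrow> (nat \<Rightarrow> 'v) \<Rightarrow> (nat \<Rightarrow> real) \<Rightarrow> real \<Rightarrow> bool" where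
  "is_eigval N orig tm l k \<longleftrightarrow>
     (\<exists>g g'. is_eigfun N orig tm l k g g' \<and> (\<exists>j<N. \<exists>t\<in>{0..l j}. g j t \<noteq> 0))"

text \<open>tr_k(f) = (A_1..A_N, C_1..C_N, B_1..B_N, D_1..D_N), where
  A_j = f_j(0), C_j = f_j(l_j), B_j = f_j'(0)/k, D_j = -f_j'(l_j)/k (k > 0),
  and B_j = D_j = 0 for k = 0.\<close>
definition trk ::
  "nat \<Rightarrow> (nat \<Rightarrow> real) \<Rightarrow> real \<Rightarrow> (nat \<Rightarrow> real \<Rightarrow> complex) \<Rightarrow> (nat \<Rightarrow> real \<Rightarrow> complex)
   \<Rightarrow> complex list" where
  "trk N l k f f' =
     map (\<lambda>j. f j 0) [0..<N] @ map (\<lambda>j. f j (l j)) [0..<N] @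
     map (\<lambda>j. if k = 0 then 0 else f' j 0 / complex_of_real k) [0..<N] @
     map (\<lambda>j. if k = 0 then 0 else - f' j (l j) / complex_of_real k) [0..<N]"

definition expikl :: "nat \<Rightarrow> real \<Rightarrow> (nat \<Rightarrow> real) \<Rightarrow> complex list" where
  "expikl N k l = map (\<lambda>j. exp (\<i> * complex_of_real (k * l j))) [0..<N]"

definition Tset :: "nat \<Rightarrow> (nat \<Rightarrow> 'v) \<Rightarrow> (nat \<Rightarrow> 'v) \<Rightarrow> (complex list \<times> complex list) set" where
  "Tset N orig tm =
     {(expikl N k l, trk N l k f f') | l k f f'.
        (\<forall>j<N. l j > 0) \<and> k \<ge> 0 \<and> is_eigval N orig tm l k \<and> is_eigfun N orig tm l k f f'}"

definition Sigma_set :: "nat \<Rightarrow> (nat \<Rightarrow> 'v) \<Rightarrow> (nat \<Rightarrow> 'v) \<Rightarrow> complex list set" where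
  "Sigma_set N orig tm = fst ` Tset N orig tm"

text \<open>Matrix S (2N x 2N, 0-based indices), U(z) = diag(z,z) S, J, M = [S+J; i(S-J)].\<close>
definition Smat :: "nat \<Rightarrow> (nat \<Rightarrow> 'v) \<Rightarrow> (nat \<Rightarrow> 'v) \<Rightarrow> nat \<Rightarrow> nat \<Rightarrow> real" where
  "Smat N orig tm r c =
    (if r < N then
       (let v = orig r; d = real (gdeg N orig tm v) in
        if c < N then (if tm c = v then 2 / d else 0)
        else (if orig (c - N) = v then 2 / d else 0) - (if c - N = r then 1 else 0))
     else
       (let j = r - N; v = tm j; d = real (gdeg N orig tm v) in
        if c < N then (if tm c = v then 2 / d else 0) - (if c = j then 1 else 0)
        else (if orig (c - N) = v then 2 / d else 0)))"

definition Umat :: "nat \<Rightarrow> (nat \<Rightarrow> 'v) \<Rightarrow> (nat \<Rightarrow> 'v) \<Rightarrow> complex list \<Rightarrow> nat \<Rightarrow> nat \<Rightarrow> complex" where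
  "Umat N orig tm z r c = z ! (r mod N) * complex_of_real (Smat N orig tm r c)"

definition Jmat :: "nat \<Rightarrow> nat \<Rightarrow> nat \<Rightarrow> real" where
  "Jmat N r c = (if c = (r + N) mod (2 * N) then 1 else 0)"

definition Mmat :: "nat \<Rightarrow> (nat \<Rightarrow> 'v) \<Rightarrow> (nat \<Rightarrow> 'v) \<Rightarrow> nat \<Rightarrow> nat \<Rightarrow> complex" where
  "Mmat N orig tm r c =
    (if r < 2 * N then complex_of_real (Smat N orig tm r c + Jmat N r c)
     else \<i> * complex_of_real (Smat N orig tm (r - 2 * N) c - Jmat N (r - 2 * N) c))"

definition matvec :: "(nat \<Rightarrow> nat \<Rightarrow> complex) \<Rightarrow> nat \<Rightarrow> nat \<Rightarrow> complex list \<Rightarrow> complex list" where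
  "matvec A m n a = map (\<lambda>r. \<Sum>c<n. A r c * a ! c) [0..<m]"

end

theory Submission
  imports Defs
begin

lemma exp_vderiv:
  "((\<lambda>t. exp (c * complex_of_real t)) has_vector_derivative c * exp (c * complex_of_real t)) (at t within S)"
  by (rule has_vector_derivative_real_field) (auto intro!: derivative_eq_intros)

lemma ode_sol:
  assumes "\<And>t. t \<in> {0..l} \<Longrightarrow> (u has_vector_derivative c * u t) (at t within {0..l})"
    and "t \<in> {0..(l::real)}"
  shows "u t = exp (c * complex_of_real t) * u 0"
proof -
  have d: "((\<lambda>t. exp (- c * complex_of_real t) * u t) has_vector_derivative 0) (at t within {0..l})"
    if "t \<in> {0..l}" for t
  proof -
    have "((\<lambda>t. exp (- c * complex_of_real t) * u t) has_vector_derivative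
      (exp (- c * complex_of_real t) * (c * u t) + (- c * exp (- c * complex_of_real t)) * u t)) (at t within {0..l})"
      by (rule has_vector_derivative_mult[OF exp_vderiv assms(1)[OF that]])
    then show ?thesis by (simp add: algebra_simps)
  qed
  obtain C where C: "\<And>x. x \<in> {0..l} \<Longrightarrow> exp (- c * complex_of_real x) * u x = C"
    using has_vector_derivative_zero_constant[of "{0..l}", OF convex_real_interval(5) d] by blast
  have "0 \<in> {0..l}" using assms(2) by auto
  from C[OF this] C[OF assms(2)] have "exp (- c * complex_of_real t) * u t = u 0" by simp
  then have "exp (c * complex_of_real t) * (exp (- c * complex_of_real t) * u t) = exp (c * complex_of_real t) * u 0" by simp
  then show ?thesis by (simp add: mult.assoc[symmetric] exp_add[symmetric])
qed

lemma sum_split2: "(\<Sum>c<2*N. F c) = (\<Sum>c<N. F c) + (\<Sum>i<N. F (N+i))" for N :: nat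
proof -
  have "{..<2*N} = {..<N} \<union> {N..<N+N}" by auto
  then have "(\<Sum>c<2*N. F c) = (\<Sum>c<N. F c) + (\<Sum>c\<in>{N..<N+N}. F c)"
    by (simp add: sum.union_disjoint ivl_disj_int)
  also have "(\<Sum>c\<in>{N..<N+N}. F c) = (\<Sum>i<N. F (N+i))"
    using sum.shift_bounds_nat_ivl[of F 0 N N] by (simp add: lessThan_atLeast0 add.commute)
  finally show ?thesis .
qed

definition psi :: "nat \<Rightarrow> (nat \<Rightarrow> 'v) \<Rightarrow> (nat \<Rightarrow> 'v) \<Rightarrow> complex list \<Rightarrow> 'v \<Rightarrow> complex" where
  "psi N orig tm x v = 2 / of_nat (gdeg N orig tm v) *
     ((\<Sum>c | c < N \<and> tm c = v. x ! c) + (\<Sum>i | i < N \<and> orig i = v. x ! (N + i)))"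

lemma sum_filt: "(\<Sum>c | c < N \<and> P c. g c) = (\<Sum>c<(N::nat). if P c then g c else 0)"
proof -
  have "{c. c < N \<and> P c} = {c \<in> {..<N}. P c}" by auto
  then show ?thesis using sum.inter_filter[of "{..<N}" g P] by simp
qed

lemma Srow1:
  assumes "r < N"
  shows "(\<Sum>c<2*N. complex_of_real (Smat N orig tm r c) * x ! c) = psi N orig tm x (orig r) - x ! (N + r)"
proof -
  let ?d = "real (gdeg N orig tm (orig r))"
  have "(\<Sum>c<2*N. complex_of_real (Smat N orig tm r c) * x ! c) =
     (\<Sum>c<N. complex_of_real (Smat N orig tm r c) * x ! c) + (\<Sum>i<N. complex_of_real (Smat N orig tm r (N+i)) * x ! (N+i))"
    by (rule sum_split2)
  also have "(\<Sum>c<N. complex_of_real (Smat N orig tm r c) * x ! c) = of_real (2 / ?d) * (\<Sum>c<N. (if tm c = orig r then x ! c else 0))"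
    using assms by (auto simp: sum_distrib_left Smat_def Let_def intro!: sum.cong)
  also have "(\<Sum>i<N. complex_of_real (Smat N orig tm r (N+i)) * x ! (N+i)) =
      of_real (2 / ?d) * (\<Sum>i<N. (if orig i = orig r then x ! (N+i) else 0)) - (\<Sum>i<N. if i = r then x ! (N+i) else 0)"
  proof -
    have "\<And>i. i < N \<Longrightarrow> complex_of_real (Smat N orig tm r (N+i)) * x ! (N+i) =
      of_real (2 / ?d) * (if orig i = orig r then x ! (N+i) else 0) - (if i = r then x ! (N+i) else 0)"
      using assms by (auto simp: Smat_def Let_def algebra_simps)
    then show ?thesis by (simp add: sum_subtractf sum_distrib_left)
  qed
  also have "(\<Sum>i<N. if i = r then x ! (N+i) else 0) = x ! (N + r)" using assms by simp
  finally show ?thesis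
    unfolding psi_def sum_filt by (simp add: distrib_left)
qed

lemma Srow2:
  assumes "r < N"
  shows "(\<Sum>c<2*N. complex_of_real (Smat N orig tm (N + r) c) * x ! c) = psi N orig tm x (tm r) - x ! r"
proof -
  let ?d = "real (gdeg N orig tm (tm r))"
  have "(\<Sum>c<2*N. complex_of_real (Smat N orig tm (N + r) c) * x ! c) =
     (\<Sum>c<N. complex_of_real (Smat N orig tm (N + r) c) * x ! c) + (\<Sum>i<N. complex_of_real (Smat N orig tm (N + r) (N+i)) * x ! (N+i))"
    by (rule sum_split2)
  also have "(\<Sum>c<N. complex_of_real (Smat N orig tm (N + r) c) * x ! c) =
     of_real (2 / ?d) * (\<Sum>c<N. (if tm c = tm r then x ! c else 0)) - (\<Sum>i<N. if i = r then x ! i else 0)"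
  proof -
    have "\<And>i. i < N \<Longrightarrow> complex_of_real (Smat N orig tm (N + r) i) * x ! i =
      of_real (2 / ?d) * (if tm i = tm r then x ! i else 0) - (if i = r then x ! i else 0)"
      using assms by (auto simp: Smat_def Let_def algebra_simps)
    then show ?thesis by (simp add: sum_subtractf sum_distrib_left)
  qed
  also have "(\<Sum>i<N. complex_of_real (Smat N orig tm (N + r) (N+i)) * x ! (N+i)) =
      of_real (2 / ?d) * (\<Sum>i<N. (if orig i = tm r then x ! (N+i) else 0))"
    using assms by (auto simp: sum_distrib_left Smat_def Let_def intro!: sum.cong)
  also have "(\<Sum>i<N. if i = r then x ! i else 0) = x ! r" using assms by simp
  finally show ?thesis
    unfolding psi_def sum_filt by (simp add: distrib_left)
qed

definition Sa :: "nat \<Rightarrow> (nat \<Rightarrow> 'v) \<Rightarrow> (nat \<Rightarrow> 'v) \<Rightarrow> complex list \<Rightarrow> nat \<Rightarrow> complex" where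
  "Sa N orig tm a r = (\<Sum>c<2*N. complex_of_real (Smat N orig tm r c) * a ! c)"

lemma matvec_nth: "r < m \<Longrightarrow> matvec A m n a ! r = (\<Sum>c<n. A r c * a ! c)"
  by (simp add: matvec_def)

lemma length_matvec[simp]: "length (matvec A m n a) = m"
  by (simp add: matvec_def)

lemma all_2N: "(\<forall>r<2*N. P r) \<longleftrightarrow> (\<forall>r<N. P r \<and> P (N + r))" for N :: nat
proof
  assume H: "\<forall>r<N. P r \<and> P (N + r)"
  show "\<forall>r<2*N. P r"
  proof (intro allI impI)
    fix r assume "r < 2*N"
    show "P r"
    proof (cases "r < N")
      case True then show ?thesis using H by auto
    next
      case False
      then have "r = N + (r - N)" "r - N < N" using \<open>r < 2*N\<close> by auto
      then show ?thesis using H by metis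
    qed
  qed
qed auto

lemma all_4N: "(\<forall>r<4*N. P r) \<longleftrightarrow> (\<forall>j<N. P j \<and> P (N + j) \<and> P (2*N + j) \<and> P (3*N + j))" for N :: nat
proof
  assume H: "\<forall>j<N. P j \<and> P (N + j) \<and> P (2*N + j) \<and> P (3*N + j)"
  show "\<forall>r<4*N. P r"
  proof (intro allI impI)
    fix r assume r: "r < 4*N"
    consider "r < N" | "N \<le> r" "r < 2*N" | "2*N \<le> r" "r < 3*N" | "3*N \<le> r" "r < 4*N" using r by linarith
    then show "P r"
    proof cases
      case 1 then show ?thesis using H by auto
    next
      case 2
      then have "r = N + (r - N)" "r - N < N" by auto
      then show ?thesis using H by metis
    next
      case 3
      then have "r = 2*N + (r - 2*N)" "r - 2*N < N" by auto
      then show ?thesis using H by metis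
    next
      case 4
      then have "r = 3*N + (r - 3*N)" "r - 3*N < N" by auto
      then show ?thesis using H by metis
    qed
  qed
qed auto

lemma Umat_eq:
  assumes "length a = 2 * N"
  shows "matvec (Umat N orig tm z) (2 * N) (2 * N) a = a \<longleftrightarrow>
    (\<forall>j<N. z ! j * Sa N orig tm a j = a ! j \<and> z ! j * Sa N orig tm a (N + j) = a ! (N + j))"
proof -
  have "matvec (Umat N orig tm z) (2 * N) (2 * N) a = a \<longleftrightarrow>
     (\<forall>r<2*N. matvec (Umat N orig tm z) (2 * N) (2 * N) a ! r = a ! r)"
    using assms by (simp add: list_eq_iff_nth_eq)
  also have "\<dots> \<longleftrightarrow> (\<forall>r<2*N. z ! (r mod N) * Sa N orig tm a r = a ! r)"
    by (simp add: matvec_nth Umat_def Sa_def sum_distrib_left mult.assoc)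
  also have "\<dots> \<longleftrightarrow> (\<forall>j<N. z ! j * Sa N orig tm a j = a ! j \<and> z ! j * Sa N orig tm a (N + j) = a ! (N + j))"
    by (subst all_2N) simp
  finally show ?thesis .
qed

lemma Jsum:
  assumes "r < 2 * N"
  shows "(\<Sum>c<2*N. complex_of_real (Jmat N r c) * a ! c) = a ! ((r + N) mod (2 * N))"
proof -
  have "(\<Sum>c<2*N. complex_of_real (Jmat N r c) * a ! c) = (\<Sum>c<2*N. if c = (r + N) mod (2 * N) then a ! c else 0)"
    by (intro sum.cong) (auto simp: Jmat_def)
  also have "\<dots> = a ! ((r + N) mod (2 * N))"
    using assms by (simp add: sum.delta')
  finally show ?thesis .
qed

lemma Mrows:
  assumes "j < N"
  shows "matvec (Mmat N orig tm) (4 * N) (2 * N) a ! j = Sa N orig tm a j + a ! (N + j)"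
    "matvec (Mmat N orig tm) (4 * N) (2 * N) a ! (N + j) = Sa N orig tm a (N + j) + a ! j"
    "matvec (Mmat N orig tm) (4 * N) (2 * N) a ! (2 * N + j) = \<i> * (Sa N orig tm a j - a ! (N + j))"
    "matvec (Mmat N orig tm) (4 * N) (2 * N) a ! (3 * N + j) = \<i> * (Sa N orig tm a (N + j) - a ! j)"
proof -
  have m1: "(j + N) mod (2 * N) = N + j" using assms by simp
  have m2: "(N + j + N) mod (2 * N) = j" using assms
    by (metis add.commute add.left_commute mod_add_self2 mod_less mult_2 trans_less_add1)
  have j2: "j < 2 * N" "N + j < 2 * N" using assms by auto
  show "matvec (Mmat N orig tm) (4 * N) (2 * N) a ! j = Sa N orig tm a j + a ! (N + j)"
    using assms Jsum[OF j2(1), of a] m1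
    by (simp add: matvec_nth Mmat_def Sa_def distrib_right sum.distrib)
  show "matvec (Mmat N orig tm) (4 * N) (2 * N) a ! (N + j) = Sa N orig tm a (N + j) + a ! j"
    using assms Jsum[OF j2(2), of a] m2
    by (simp add: matvec_nth Mmat_def Sa_def distrib_right sum.distrib)
  show "matvec (Mmat N orig tm) (4 * N) (2 * N) a ! (2 * N + j) = \<i> * (Sa N orig tm a j - a ! (N + j))"
    using assms Jsum[OF j2(1), of a] m1
    by (simp add: matvec_nth Mmat_def Sa_def left_diff_distrib sum_subtractf sum_distrib_left[symmetric] mult.assoc)
  have e: "3 * N + j - 2 * N = N + j" by simp
  show "matvec (Mmat N orig tm) (4 * N) (2 * N) a ! (3 * N + j) = \<i> * (Sa N orig tm a (N + j) - a ! j)"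
    using assms Jsum[OF j2(2), of a] m2
    by (simp add: matvec_nth Mmat_def Sa_def e left_diff_distrib sum_subtractf sum_distrib_left[symmetric] mult.assoc)
qed

lemma trk_nth:
  assumes "j < N"
  shows "trk N l k f f' ! j = f j 0" "trk N l k f f' ! (N + j) = f j (l j)"
    "trk N l k f f' ! (2 * N + j) = (if k = 0 then 0 else f' j 0 / complex_of_real k)"
    "trk N l k f f' ! (3 * N + j) = (if k = 0 then 0 else - f' j (l j) / complex_of_real k)"
  using assms by (simp_all add: trk_def nth_append)

lemma length_trk[simp]: "length (trk N l k f f') = 4 * N"
  by (simp add: trk_def)

lemma eq_trk:
  assumes "\<And>j. j < N \<Longrightarrow> Sa N orig tm a j + a ! (N + j) = f j 0"
    "\<And>j. j < N \<Longrightarrow> Sa N orig tm a (N + j) + a ! j = f j (l j)"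
    "\<And>j. j < N \<Longrightarrow> \<i> * (Sa N orig tm a j - a ! (N + j)) = (if k = 0 then 0 else f' j 0 / complex_of_real k)"
    "\<And>j. j < N \<Longrightarrow> \<i> * (Sa N orig tm a (N + j) - a ! j) = (if k = 0 then 0 else - f' j (l j) / complex_of_real k)"
  shows "matvec (Mmat N orig tm) (4 * N) (2 * N) a = trk N l k f f'"
proof -
  have "\<forall>r<4*N. matvec (Mmat N orig tm) (4 * N) (2 * N) a ! r = trk N l k f f' ! r"
    by (subst all_4N) (simp add: Mrows trk_nth assms)
  then show ?thesis by (simp add: list_eq_iff_nth_eq)
qed

lemma fin_O[simp]: "finite {j. j < (N::nat) \<and> P j}" by simp

lemma psi_phi:
  assumes "\<And>c. c < N \<Longrightarrow> x ! c = (\<phi> (tm c) + p c) / 2"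
    "\<And>c. c < N \<Longrightarrow> x ! (N + c) = (\<phi> (orig c) - q c) / 2"
    "(\<Sum>j | j < N \<and> orig j = v. q j) - (\<Sum>j | j < N \<and> tm j = v. p j) = 0"
    "gdeg N orig tm v > 0"
  shows "psi N orig tm x v = \<phi> v"
proof -
  let ?T = "{c. c < N \<and> tm c = v}" and ?O = "{c. c < N \<and> orig c = v}"
  have t: "(\<Sum>c\<in>?T. x ! c) = (of_nat (card ?T) * \<phi> v + (\<Sum>c\<in>?T. p c)) / 2"
  proof -
    have "(\<Sum>c\<in>?T. x ! c) = (\<Sum>c\<in>?T. (\<phi> v + p c) / 2)"
      using assms(1) by (intro sum.cong) auto
    also have "\<dots> = (of_nat (card ?T) * \<phi> v + (\<Sum>c\<in>?T. p c)) / 2"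
      by (simp add: sum_divide_distrib[symmetric] sum.distrib)
    finally show ?thesis .
  qed
  have o: "(\<Sum>c\<in>?O. x ! (N + c)) = (of_nat (card ?O) * \<phi> v - (\<Sum>c\<in>?O. q c)) / 2"
  proof -
    have "(\<Sum>c\<in>?O. x ! (N + c)) = (\<Sum>c\<in>?O. (\<phi> v - q c) / 2)"
      using assms(2) by (intro sum.cong) auto
    also have "\<dots> = (of_nat (card ?O) * \<phi> v - (\<Sum>c\<in>?O. q c)) / 2"
      by (simp add: sum_divide_distrib[symmetric] sum_subtractf)
    finally show ?thesis .
  qed
  have d: "gdeg N orig tm v = card ?O + card ?T" by (simp add: gdeg_def)
  have "psi N orig tm x v = 2 / of_nat (gdeg N orig tm v) *
     ((of_nat (card ?T) * \<phi> v + (\<Sum>c\<in>?T. p c)) / 2 + (of_nat (card ?O) * \<phi> v - (\<Sum>c\<in>?O. q c)) / 2)"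
    by (simp add: psi_def t o)
  also have "\<dots> = 1 / of_nat (gdeg N orig tm v) * (of_nat (gdeg N orig tm v) * \<phi> v - ((\<Sum>c\<in>?O. q c) - (\<Sum>c\<in>?T. p c)))"
  proof -
    have g: "\<And>D X Y::complex. 2 / D * (X / 2 + Y / 2) = 1 / D * (X + Y)" 
    proof -
      fix D X Y :: complex
      have "X / 2 + Y / 2 = (X + Y) / 2" by (simp add: add_divide_distrib)
      then show "2 / D * (X / 2 + Y / 2) = 1 / D * (X + Y)" by simp
    qed
    show ?thesis unfolding g by (simp add: d algebra_simps)
  qed
  also have "\<dots> = \<phi> v" using assms(3,4) by simp
  finally show ?thesis .
qed

lemma kirch_from_psi:
  assumes "\<And>j. j < N \<Longrightarrow> F0 j = \<kappa> * (psi N orig tm x (orig j) - 2 * x ! (N + j))"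
    "\<And>j. j < N \<Longrightarrow> F1 j = \<kappa> * (2 * x ! j - psi N orig tm x (tm j))"
  shows "(\<Sum>j | j < N \<and> orig j = v. F0 j) - (\<Sum>j | j < N \<and> tm j = v. F1 j) = 0"
proof -
  let ?T = "{c. c < N \<and> tm c = v}" and ?O = "{c. c < N \<and> orig c = v}"
  let ?p = "psi N orig tm x v"
  have a: "(\<Sum>j\<in>?O. F0 j) = \<kappa> * (of_nat (card ?O) * ?p - 2 * (\<Sum>j\<in>?O. x ! (N + j)))"
  proof -
    have "(\<Sum>j\<in>?O. F0 j) = (\<Sum>j\<in>?O. \<kappa> * (?p - 2 * x ! (N + j)))"
      using assms(1) by (intro sum.cong) auto
    then show ?thesis by (simp add: sum_distrib_left[symmetric] sum_subtractf)
  qed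
  have b: "(\<Sum>j\<in>?T. F1 j) = \<kappa> * (2 * (\<Sum>j\<in>?T. x ! j) - of_nat (card ?T) * ?p)"
  proof -
    have "(\<Sum>j\<in>?T. F1 j) = (\<Sum>j\<in>?T. \<kappa> * (2 * x ! j - ?p))"
      using assms(2) by (intro sum.cong) auto
    then show ?thesis by (simp add: sum_distrib_left[symmetric] sum_subtractf)
  qed
  have d: "gdeg N orig tm v = card ?O + card ?T" by (simp add: gdeg_def)
  show ?thesis
  proof (cases "gdeg N orig tm v = 0")
    case True
    then have "?O = {}" "?T = {}" using d by (auto simp: card_eq_0_iff)
    then show ?thesis by (simp only:) simp
  next
    case False
    have "of_nat (gdeg N orig tm v) * ?p = 2 * ((\<Sum>j\<in>?T. x ! j) + (\<Sum>j\<in>?O. x ! (N + j)))"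
      using False by (simp add: psi_def)
    have "\<kappa> * (of_nat (card ?O) * ?p - 2 * (\<Sum>j\<in>?O. x ! (N + j))) -
        \<kappa> * (2 * (\<Sum>j\<in>?T. x ! j) - of_nat (card ?T) * ?p) =
        \<kappa> * (of_nat (gdeg N orig tm v) * ?p - 2 * ((\<Sum>j\<in>?T. x ! j) + (\<Sum>j\<in>?O. x ! (N + j))))"
      unfolding d by (simp add: algebra_simps)
    also have "\<dots> = 0" using \<open>of_nat (gdeg N orig tm v) * ?p = _\<close> by simp
    finally show ?thesis unfolding a b .
  qed
qed

lemma regroup:
  fixes N :: nat and F :: "nat \<Rightarrow> complex" and g :: "'v \<Rightarrow> complex"
  assumes "finite V" "\<And>j. j < N \<Longrightarrow> p j \<in> V"
  shows "(\<Sum>j<N. F j * g (p j)) = (\<Sum>v\<in>V. g v * (\<Sum>j | j < N \<and> p j = v. F j))"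
proof -
  have "(\<Sum>v\<in>V. g v * (\<Sum>j | j < N \<and> p j = v. F j)) = (\<Sum>v\<in>V. \<Sum>j<N. if p j = v then F j * g v else 0)"
  proof (intro sum.cong refl)
    fix v
    have "(\<Sum>j | j < N \<and> p j = v. F j) = (\<Sum>j<N. if p j = v then F j else 0)"
      by (rule sum_filt)
    moreover have "g v * (\<Sum>j<N. if p j = v then F j else 0) = (\<Sum>j<N. g v * (if p j = v then F j else 0))"
      by (rule sum_distrib_left)
    moreover have "\<dots> = (\<Sum>j<N. if p j = v then F j * g v else 0)"
      by (intro sum.cong) (auto simp: mult.commute)
    ultimately show "g v * (\<Sum>j | j < N \<and> p j = v. F j) = (\<Sum>j<N. if p j = v then F j * g v else 0)"
      by simp
  qed
  also have "\<dots> = (\<Sum>j<N. \<Sum>v\<in>V. if p j = v then F j * g v else 0)"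
    by (rule sum.swap)
  also have "\<dots> = (\<Sum>j<N. F j * g (p j))"
    using assms by (intro sum.cong) (auto simp: sum.delta)
  finally show ?thesis by simp
qed

lemma zero_k_const:
  assumes ef: "is_eigfun N orig tm l 0 f f'" and lpos: "\<forall>j<N. l j > 0"
  shows "\<exists>\<phi>. \<forall>j<N. f j 0 = \<phi> (orig j) \<and> f j (l j) = \<phi> (tm j) \<and> \<phi> (orig j) = \<phi> (tm j)"
proof -
  from ef obtain \<phi> where phi: "\<And>j. j < N \<Longrightarrow> f j 0 = \<phi> (orig j) \<and> f j (l j) = \<phi> (tm j)"
    and K: "\<And>v. (\<Sum>j | j < N \<and> orig j = v. f' j 0) - (\<Sum>j | j < N \<and> tm j = v. f' j (l j)) = 0"
    and D: "\<And>j t. j < N \<Longrightarrow> t \<in> {0..l j} \<Longrightarrow> (f j has_vector_derivative f' j t) (at t within {0..l j}) \<and>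
        (f' j has_vector_derivative 0) (at t within {0..l j})"
    unfolding is_eigfun_def by auto
  define \<beta> where "\<beta> j = f' j 0" for j
  have fc: "f' j t = \<beta> j" if "j < N" "t \<in> {0..l j}" for j t
    using ode_sol[of "l j" "f' j" 0 t] D[OF that(1)] that by (simp add: \<beta>_def)
  have lin: "\<phi> (tm j) - \<phi> (orig j) = of_real (l j) * \<beta> j" if j: "j < N" for j
  proof -
    have "(\<lambda>t. f j t - of_real t * \<beta> j) t = exp (0 * complex_of_real t) * (\<lambda>t. f j t - of_real t * \<beta> j) 0"
      if "t \<in> {0..l j}" for t
    proof (rule ode_sol[OF _ that])
      fix s assume s: "s \<in> {0..l j}"
      have "((\<lambda>t. f j t - of_real t * \<beta> j) has_vector_derivative (f' j s - 1 * \<beta> j)) (at s within {0..l j})"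
        using D[OF j s] by (auto intro!: derivative_eq_intros)
      then show "((\<lambda>t. f j t - of_real t * \<beta> j) has_vector_derivative 0 * (f j s - of_real s * \<beta> j)) (at s within {0..l j})"
        using fc[OF j s] by simp
    qed
    note X = this
    have "0 \<le> l j" using lpos j by auto
    from X[of "l j"] this phi[OF j] have "\<phi> (tm j) = \<phi> (orig j) + of_real (l j) * \<beta> j"
      by (simp add: algebra_simps)
    then show ?thesis by simp
  qed
  have K': "(\<Sum>j | j < N \<and> tm j = v. cnj (\<beta> j)) - (\<Sum>j | j < N \<and> orig j = v. cnj (\<beta> j)) = 0" for v
  proof -
    have "(\<Sum>j | j < N \<and> tm j = v. f' j (l j)) = (\<Sum>j | j < N \<and> tm j = v. \<beta> j)"
      using lpos by (intro sum.cong) (auto intro!: fc)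
    then have "(\<Sum>j | j < N \<and> orig j = v. \<beta> j) = (\<Sum>j | j < N \<and> tm j = v. \<beta> j)"
      using K[of v] by (simp add: \<beta>_def)
    then have "cnj (\<Sum>j | j < N \<and> orig j = v. \<beta> j) = cnj (\<Sum>j | j < N \<and> tm j = v. \<beta> j)" by simp
    then show ?thesis by (simp add: cnj_sum)
  qed
  define V where "V = orig ` {..<N} \<union> tm ` {..<N}"
  have fV: "finite V" by (simp add: V_def)
  have "(\<Sum>j<N. of_real (l j) * \<beta> j * cnj (\<beta> j)) = (\<Sum>j<N. cnj (\<beta> j) * (\<phi> (tm j) - \<phi> (orig j)))"
    by (intro sum.cong) (auto simp: lin)
  also have "\<dots> = (\<Sum>j<N. cnj (\<beta> j) * \<phi> (tm j)) - (\<Sum>j<N. cnj (\<beta> j) * \<phi> (orig j))"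
    by (simp add: right_diff_distrib sum_subtractf)
  also have "\<dots> = (\<Sum>v\<in>V. \<phi> v * ((\<Sum>j | j < N \<and> tm j = v. cnj (\<beta> j)) - (\<Sum>j | j < N \<and> orig j = v. cnj (\<beta> j))))"
  proof -
    have r1: "(\<Sum>j<N. cnj (\<beta> j) * \<phi> (tm j)) = (\<Sum>v\<in>V. \<phi> v * (\<Sum>j | j < N \<and> tm j = v. cnj (\<beta> j)))"
      by (rule regroup[OF fV]) (auto simp: V_def)
    have r2: "(\<Sum>j<N. cnj (\<beta> j) * \<phi> (orig j)) = (\<Sum>v\<in>V. \<phi> v * (\<Sum>j | j < N \<and> orig j = v. cnj (\<beta> j)))"
      by (rule regroup[OF fV]) (auto simp: V_def)
    show ?thesis unfolding r1 r2 by (simp add: right_diff_distrib sum_subtractf)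
  qed
  also have "\<dots> = 0" by (simp add: K')
  finally have E0: "(\<Sum>j<N. of_real (l j) * \<beta> j * cnj (\<beta> j)) = 0" .
  have "(\<Sum>j<N. of_real (l j) * \<beta> j * cnj (\<beta> j)) = of_real (\<Sum>j<N. l j * (cmod (\<beta> j))\<^sup>2)"
    unfolding of_real_sum by (intro sum.cong refl) (simp only: of_real_mult complex_norm_square mult.assoc)
  with E0 have E1: "(\<Sum>j<N. l j * (cmod (\<beta> j))\<^sup>2) = 0" by (metis of_real_eq_0_iff)
  have "\<forall>j\<in>{..<N}. l j * (cmod (\<beta> j))\<^sup>2 = 0"
    using E1 lpos by (subst sum_nonneg_eq_0_iff[symmetric]) auto
  then have "\<beta> j = 0" if "j < N" for j using that lpos by (metis lessThan_iff less_irrefl mult_eq_0_iff norm_eq_zero power_eq_0_iff)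
  then have "\<phi> (orig j) = \<phi> (tm j)" if "j < N" for j using lin[OF that] that by simp
  then show ?thesis using phi by blast
qed

lemma mk_nth:
  assumes "j < N"
  shows "map (\<lambda>c. if c < N then A c else B (c - N)) [0..<2*N] ! j = A j"
    "map (\<lambda>c. if c < N then A c else B (c - N)) [0..<2*N] ! (N + j) = B j"
  using assms by (simp_all add: nth_append)

lemma gdeg_pos:
  assumes "j < N"
  shows "gdeg N orig tm (orig j) > 0" "gdeg N orig tm (tm j) > 0"
proof -
  have "card {i. i < N \<and> orig i = orig j} > 0" "card {i. i < N \<and> tm i = tm j} > 0"
    using assms by (auto simp: card_gt_0_iff)
  then show "gdeg N orig tm (orig j) > 0" "gdeg N orig tm (tm j) > 0" by (auto simp: gdeg_def)
qed

lemma expikl_nth: "j < N \<Longrightarrow> expikl N k l ! j = exp (\<i> * complex_of_real (k * l j))"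
  by (simp add: expikl_def)

lemma Sa1: "r < N \<Longrightarrow> Sa N orig tm x r = psi N orig tm x (orig r) - x ! (N + r)"
  unfolding Sa_def by (rule Srow1)
lemma Sa2: "r < N \<Longrightarrow> Sa N orig tm x (N + r) = psi N orig tm x (tm r) - x ! r"
  unfolding Sa_def by (rule Srow2)

lemma fwd_zero:
  assumes lpos: "\<forall>j<N. l j > 0" and ef: "is_eigfun N orig tm l 0 f f'"
  shows "\<exists>a. length a = 2 * N \<and> matvec (Umat N orig tm (expikl N 0 l)) (2 * N) (2 * N) a = a \<and>
     matvec (Mmat N orig tm) (4 * N) (2 * N) a = trk N l 0 f f'"
proof -
  obtain \<phi> where phi: "\<And>j. j < N \<Longrightarrow> f j 0 = \<phi> (orig j) \<and> f j (l j) = \<phi> (tm j) \<and> \<phi> (orig j) = \<phi> (tm j)"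
    using zero_k_const[OF ef lpos] by blast
  define a where "a = map (\<lambda>c. if c < N then \<phi> (tm c) / 2 else \<phi> (orig (c - N)) / 2) [0..<2*N]"
  have a1: "a ! j = \<phi> (tm j) / 2" if "j < N" for j
    unfolding a_def by (rule mk_nth(1)[OF that])
  have a2: "a ! (N + j) = \<phi> (orig j) / 2" if "j < N" for j
    unfolding a_def by (rule mk_nth(2)[OF that])
  have ps: "psi N orig tm a v = \<phi> v" if "gdeg N orig tm v > 0" for v
    by (rule psi_phi[where p = "\<lambda>_. 0" and q = "\<lambda>_. 0"]) (auto simp: a1 a2 that)
  have S1: "Sa N orig tm a j = \<phi> (orig j) / 2" and S2: "Sa N orig tm a (N + j) = \<phi> (tm j) / 2"
    if "j < N" for j
    using that by (simp_all add: Sa1 Sa2 ps gdeg_pos a1 a2)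
  have len: "length a = 2 * N" by (simp add: a_def)
  show ?thesis
  proof (intro exI conjI)
    show "length a = 2 * N" by fact
    show "matvec (Umat N orig tm (expikl N 0 l)) (2 * N) (2 * N) a = a"
      unfolding Umat_eq[OF len] by (simp add: expikl_nth S1 S2 a1 a2 phi)
    show "matvec (Mmat N orig tm) (4 * N) (2 * N) a = trk N l 0 f f'"
      by (rule eq_trk) (simp_all add: S1 S2 a1 a2 phi)
  qed
qed

lemma fwd_pos:
  assumes lpos: "\<forall>j<N. l j > 0" and kpos: "k > 0" and ef: "is_eigfun N orig tm l k f f'"
  shows "\<exists>a. length a = 2 * N \<and> matvec (Umat N orig tm (expikl N k l)) (2 * N) (2 * N) a = a \<and>
     matvec (Mmat N orig tm) (4 * N) (2 * N) a = trk N l k f f'"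
proof -
  from ef obtain \<phi> where phi: "\<And>j. j < N \<Longrightarrow> f j 0 = \<phi> (orig j) \<and> f j (l j) = \<phi> (tm j)"
    and K: "\<And>v. (\<Sum>j | j < N \<and> orig j = v. f' j 0) - (\<Sum>j | j < N \<and> tm j = v. f' j (l j)) = 0"
    and D: "\<And>j t. j < N \<Longrightarrow> t \<in> {0..l j} \<Longrightarrow> (f j has_vector_derivative f' j t) (at t within {0..l j}) \<and>
        (f' j has_vector_derivative (- complex_of_real (k\<^sup>2) * f j t)) (at t within {0..l j})"
    unfolding is_eigfun_def by auto
  define \<kappa> where "\<kappa> = \<i> * complex_of_real k"
  have kap0: "\<kappa> \<noteq> 0" using kpos by (simp add: \<kappa>_def)
  have kk: "- complex_of_real (k\<^sup>2) * F / \<kappa> = \<kappa> * F" for F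
    using kpos unfolding \<kappa>_def by (simp add: field_simps power2_eq_square)
  define A where "A j = (f j (l j) + f' j (l j) / \<kappa>) / 2" for j
  define B where "B j = (f j 0 - f' j 0 / \<kappa>) / 2" for j
  define a where "a = map (\<lambda>c. if c < N then A c else B (c - N)) [0..<2*N]"
  have a1: "a ! j = A j" if "j < N" for j
    unfolding a_def by (rule mk_nth(1)[OF that])
  have a2: "a ! (N + j) = B j" if "j < N" for j
    unfolding a_def by (rule mk_nth(2)[OF that])
  have ps: "psi N orig tm a v = \<phi> v" if "gdeg N orig tm v > 0" for v
  proof (rule psi_phi[where p = "\<lambda>c. f' c (l c) / \<kappa>" and q = "\<lambda>c. f' c 0 / \<kappa>"])
    show "(\<Sum>j | j < N \<and> orig j = v. f' j 0 / \<kappa>) - (\<Sum>j | j < N \<and> tm j = v. f' j (l j) / \<kappa>) = 0"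
      using K[of v] by (simp add: sum_divide_distrib[symmetric] diff_divide_distrib[symmetric])
  qed (auto simp: a1 a2 that A_def B_def phi)
  have S1: "Sa N orig tm a j = (f j 0 + f' j 0 / \<kappa>) / 2" and S2: "Sa N orig tm a (N + j) = (f j (l j) - f' j (l j) / \<kappa>) / 2"
    if "j < N" for j
    using that by (simp_all add: Sa1 Sa2 ps gdeg_pos a1 a2 phi A_def B_def field_simps)
  have ode1: "f j (l j) + f' j (l j) / \<kappa> = exp (\<kappa> * complex_of_real (l j)) * (f j 0 + f' j 0 / \<kappa>)" if j: "j < N" for j
  proof (rule ode_sol[where u = "\<lambda>t. f j t + f' j t / \<kappa>"])
    fix t assume t: "t \<in> {0..l j}"
    have "((\<lambda>t. f j t + f' j t / \<kappa>) has_vector_derivative (f' j t + (- complex_of_real (k\<^sup>2) * f j t) / \<kappa>)) (at t within {0..l j})"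
      using D[OF j t] by (auto intro!: derivative_eq_intros)
    note X = this
    have e: "f' j t + (- complex_of_real (k\<^sup>2) * f j t) / \<kappa> = \<kappa> * (f j t + f' j t / \<kappa>)"
      using kpos unfolding \<kappa>_def by (simp add: field_simps power2_eq_square)
    show "((\<lambda>t. f j t + f' j t / \<kappa>) has_vector_derivative \<kappa> * (f j t + f' j t / \<kappa>)) (at t within {0..l j})"
      unfolding e[symmetric] by (rule X)
  qed (use lpos j in auto)
  have ode2: "f j (l j) - f' j (l j) / \<kappa> = exp (- \<kappa> * complex_of_real (l j)) * (f j 0 - f' j 0 / \<kappa>)" if j: "j < N" for j
  proof (rule ode_sol[where u = "\<lambda>t. f j t - f' j t / \<kappa>"])
    fix t assume t: "t \<in> {0..l j}"
    have "((\<lambda>t. f j t - f' j t / \<kappa>) has_vector_derivative (f' j t - (- complex_of_real (k\<^sup>2) * f j t) / \<kappa>)) (at t within {0..l j})"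
      using D[OF j t] by (auto intro!: derivative_eq_intros)
    note X = this
    have e: "f' j t - (- complex_of_real (k\<^sup>2) * f j t) / \<kappa> = - \<kappa> * (f j t - f' j t / \<kappa>)"
      using kpos unfolding \<kappa>_def by (simp add: field_simps power2_eq_square)
    show "((\<lambda>t. f j t - f' j t / \<kappa>) has_vector_derivative - \<kappa> * (f j t - f' j t / \<kappa>)) (at t within {0..l j})"
      unfolding e[symmetric] by (rule X)
  qed (use lpos j in auto)
  have z: "expikl N k l ! j = exp (\<kappa> * complex_of_real (l j))" if "j < N" for j
    using that by (simp add: expikl_nth \<kappa>_def mult.assoc)
  have len: "length a = 2 * N" by (simp add: a_def)
  show ?thesis
  proof (intro exI conjI)
    show "length a = 2 * N" by fact
    show "matvec (Umat N orig tm (expikl N k l)) (2 * N) (2 * N) a = a"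
      unfolding Umat_eq[OF len]
    proof (intro allI impI conjI)
      fix j assume j: "j < N"
      show "expikl N k l ! j * Sa N orig tm a j = a ! j"
        using ode1[OF j] by (simp add: z j S1 a1 A_def)
      have "exp (\<kappa> * complex_of_real (l j)) * exp (- \<kappa> * complex_of_real (l j)) = 1"
        by (simp add: exp_add[symmetric])
      then show "expikl N k l ! j * Sa N orig tm a (N + j) = a ! (N + j)"
        using ode2[OF j] by (simp add: z j S2 a2 B_def mult.assoc[symmetric])
    qed
    show "matvec (Mmat N orig tm) (4 * N) (2 * N) a = trk N l k f f'"
      apply (rule eq_trk)
         apply (simp_all add: S1 S2 a1 a2 A_def B_def)
      using kpos by (simp_all add: field_simps \<kappa>_def)
  qed
qed

lemma exp_ne1:
  assumes "0 < x" "x < 2 * pi"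
  shows "exp (\<i> * complex_of_real x) \<noteq> 1"
proof
  assume "exp (\<i> * complex_of_real x) = 1"
  then have "exp (\<i> * complex_of_real x) = exp 0" by simp
  then have "\<i> * complex_of_real x = 0"
    by (rule exp_complex_eqI[rotated]) (use assms in simp)
  then show False using assms by simp
qed

lemma nonvanish:
  fixes \<alpha> \<beta> :: complex
  assumes kpos: "k > 0" and lp: "L > 0"
    and H: "\<forall>t\<in>{0..L}. \<alpha> * exp (\<i> * complex_of_real k * complex_of_real t) + \<beta> * exp (- (\<i> * complex_of_real k) * complex_of_real t) = 0"
  shows "\<alpha> = 0 \<and> \<beta> = 0"
proof -
  define t1 where "t1 = min L (1 / k)"
  have t1: "t1 \<in> {0..L}" "t1 > 0" "t1 \<le> 1 / k" using lp kpos by (auto simp: t1_def)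
  define E where "E = exp (\<i> * complex_of_real k * complex_of_real t1)"
  have E0: "E \<noteq> 0" by (simp add: E_def)
  have Em: "exp (- (\<i> * complex_of_real k) * complex_of_real t1) = inverse E"
    by (simp add: E_def exp_minus[symmetric])
  have h0: "\<alpha> + \<beta> = 0" using H by (auto dest: bspec[of _ _ 0] simp: lp less_imp_le)
  have h1: "\<alpha> * E + \<beta> * inverse E = 0"
  proof -
    have "\<alpha> * E + \<beta> * exp (- (\<i> * complex_of_real k) * complex_of_real t1) = 0"
      using H t1(1) unfolding E_def by blast
    then show ?thesis unfolding Em .
  qed
  have "E * E = exp (\<i> * complex_of_real (2 * k * t1))"
    by (simp add: E_def exp_add[symmetric] algebra_simps)
  moreover have "2 * k * t1 > 0" using kpos t1 by simp
  moreover have "2 * k * t1 < 2 * pi"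
  proof -
    have "k * t1 \<le> 1" using t1(3) kpos by (simp add: field_simps)
    then show ?thesis using pi_gt3 by linarith
  qed
  ultimately have EE: "E * E \<noteq> 1" using exp_ne1 by metis
  from h0 have "\<beta> = - \<alpha>" by (simp add: eq_neg_iff_add_eq_0 add.commute)
  with h1 have "\<alpha> * (E * E - 1) = 0" using E0 by (simp add: field_simps)
  with EE have "\<alpha> = 0" by simp
  with h0 show ?thesis by simp
qed

lemma rev_pos:
  assumes lpos: "\<forall>j<N. l j > 0" and kpos: "k > 0" and len: "length a = 2 * N"
    and U: "matvec (Umat N orig tm (expikl N k l)) (2 * N) (2 * N) a = a"
  shows "\<exists>f f'. is_eigfun N orig tm l k f f' \<and> matvec (Mmat N orig tm) (4 * N) (2 * N) a = trk N l k f f' \<and>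
     ((\<exists>c<2*N. a ! c \<noteq> 0) \<longrightarrow> is_eigval N orig tm l k)"
proof -
  define \<kappa> where "\<kappa> = \<i> * complex_of_real k"
  have kap0: "\<kappa> \<noteq> 0" using kpos by (simp add: \<kappa>_def)
  define z where "z = expikl N k l"
  have zj: "z ! j = exp (\<kappa> * complex_of_real (l j))" if "j < N" for j
    using that by (simp add: z_def expikl_nth \<kappa>_def mult.assoc)
  have z0: "z ! j \<noteq> 0" if "j < N" for j using zj[OF that] by simp
  have zinv: "exp (- \<kappa> * complex_of_real (l j)) = inverse (z ! j)" if "j < N" for j
    using zj[OF that] by (simp add: exp_minus[symmetric])
  have UU: "z ! j * Sa N orig tm a j = a ! j \<and> z ! j * Sa N orig tm a (N + j) = a ! (N + j)" if "j < N" for j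
    using U that unfolding Umat_eq[OF len] z_def by blast
  let ?p = "psi N orig tm a"
  have S1: "a ! j / z ! j = ?p (orig j) - a ! (N + j)" if j: "j < N" for j
    using UU[OF j] z0[OF j] Sa1[OF j, of orig tm a] by (simp add: field_simps)
  have S2: "a ! (N + j) / z ! j = ?p (tm j) - a ! j" if j: "j < N" for j
    using UU[OF j] z0[OF j] Sa2[OF j, of orig tm a] by (simp add: field_simps)
  define f where "f j t = (a ! j / z ! j) * exp (\<kappa> * complex_of_real t) + a ! (N + j) * exp (- \<kappa> * complex_of_real t)" for j t
  define f' where "f' j t = \<kappa> * (a ! j / z ! j) * exp (\<kappa> * complex_of_real t) - \<kappa> * a ! (N + j) * exp (- \<kappa> * complex_of_real t)" for j t
  have f0: "f j 0 = ?p (orig j)" and fl: "f j (l j) = ?p (tm j)"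
    and f'0: "f' j 0 = \<kappa> * (?p (orig j) - 2 * a ! (N + j))" and f'l: "f' j (l j) = \<kappa> * (2 * a ! j - ?p (tm j))"
    if j: "j < N" for j
  proof -
    have e1: "exp (\<kappa> * complex_of_real (l j)) = z ! j" using zj[OF j] by simp
    have e2: "exp (- \<kappa> * complex_of_real (l j)) = inverse (z ! j)" using zinv[OF j] .
    show "f j 0 = ?p (orig j)" using S1[OF j] by (simp add: f_def algebra_simps)
    show "f j (l j) = ?p (tm j)" using S2[OF j] z0[OF j]
      unfolding f_def e1 e2 by (simp add: field_simps)
    show "f' j 0 = \<kappa> * (?p (orig j) - 2 * a ! (N + j))" by (simp add: f'_def S1[OF j] algebra_simps)
    have "f' j (l j) = \<kappa> * (a ! j - a ! (N + j) / z ! j)" using z0[OF j]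
      unfolding f'_def e1 e2 by (simp add: field_simps)
    then show "f' j (l j) = \<kappa> * (2 * a ! j - ?p (tm j))" by (simp add: S2[OF j] algebra_simps)
  qed
  have ef: "is_eigfun N orig tm l k f f'"
    unfolding is_eigfun_def
  proof (intro conjI allI impI ballI)
    fix j t assume j: "j < N" and t: "t \<in> {0..l j}"
    note d1 = exp_vderiv[of \<kappa> t "{0..l j}"] and d2 = exp_vderiv[of "- \<kappa>" t "{0..l j}"]
    show "(f j has_vector_derivative f' j t) (at t within {0..l j})"
      unfolding f_def f'_def
      by (rule has_vector_derivative_eq_rhs[OF has_vector_derivative_add[OF has_vector_derivative_mult_right[OF d1] has_vector_derivative_mult_right[OF d2]]])
        (simp add: algebra_simps)
    have kk: "- complex_of_real (k\<^sup>2) = \<kappa> * \<kappa>" by (simp add: \<kappa>_def power2_eq_square algebra_simps)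
    show "(f' j has_vector_derivative - complex_of_real (k\<^sup>2) * f j t) (at t within {0..l j})"
      unfolding f_def f'_def kk
      by (rule has_vector_derivative_eq_rhs[OF has_vector_derivative_diff[OF has_vector_derivative_mult_right[OF d1] has_vector_derivative_mult_right[OF d2]]])
        (simp add: algebra_simps)
  next
    show "\<exists>\<phi>. \<forall>j<N. f j 0 = \<phi> (orig j) \<and> f j (l j) = \<phi> (tm j)"
      using f0 fl by blast
  next
    fix v
    show "(\<Sum>j | j < N \<and> orig j = v. f' j 0) - (\<Sum>j | j < N \<and> tm j = v. f' j (l j)) = 0"
      by (rule kirch_from_psi[where \<kappa> = \<kappa> and x = a]) (auto simp: f'0 f'l)
  qed
  have tr: "matvec (Mmat N orig tm) (4 * N) (2 * N) a = trk N l k f f'"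
  proof (rule eq_trk)
    fix j assume j: "j < N"
    have s1: "Sa N orig tm a j = a ! j / z ! j" using UU[OF j] z0[OF j] by (simp add: field_simps)
    have s2: "Sa N orig tm a (N + j) = a ! (N + j) / z ! j" using UU[OF j] z0[OF j] by (simp add: field_simps)
    show "Sa N orig tm a j + a ! (N + j) = f j 0" using f0[OF j] S1[OF j] s1 by simp
    show "Sa N orig tm a (N + j) + a ! j = f j (l j)" using fl[OF j] S2[OF j] s2 by simp
    show "\<i> * (Sa N orig tm a j - a ! (N + j)) = (if k = 0 then 0 else f' j 0 / complex_of_real k)"
      using f'0[OF j] S1[OF j] s1 kpos by (simp add: \<kappa>_def)
    show "\<i> * (Sa N orig tm a (N + j) - a ! j) = (if k = 0 then 0 else - f' j (l j) / complex_of_real k)"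
    proof -
      have "f' j (l j) / complex_of_real k = \<i> * (2 * a ! j - ?p (tm j))"
        using f'l[OF j] kpos by (simp add: \<kappa>_def)
      then show ?thesis using kpos by (simp add: s2 S2[OF j] algebra_simps)
    qed
  qed
  have ev: "is_eigval N orig tm l k" if ex: "\<exists>c<2*N. a ! c \<noteq> 0"
  proof -
    obtain c where c: "c < 2 * N" "a ! c \<noteq> 0" using ex by blast
    obtain j where j: "j < N" "a ! j \<noteq> 0 \<or> a ! (N + j) \<noteq> 0"
    proof (cases "c < N")
      case True then show ?thesis using c that by blast
    next
      case False
      then have "c = N + (c - N)" "c - N < N" using c by auto
      then show ?thesis using c that by metis
    qed
    have "\<exists>t\<in>{0..l j}. f j t \<noteq> 0"
    proof (rule ccontr)
      assume "\<not> ?thesis"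
      then have "\<forall>t\<in>{0..l j}. (a ! j / z ! j) * exp (\<i> * complex_of_real k * complex_of_real t) +
          a ! (N + j) * exp (- (\<i> * complex_of_real k) * complex_of_real t) = 0"
        by (simp add: f_def \<kappa>_def)
      from nonvanish[OF kpos _ this] lpos j z0[OF j(1)] show False by auto
    qed
    then show ?thesis unfolding is_eigval_def using ef j(1) by blast
  qed
  show ?thesis using ef tr ev by blast
qed

theorem mainTheorem7:
  fixes N :: nat and orig tm :: "nat \<Rightarrow> 'v"
  shows "Tset N orig tm =
    {(z, matvec (Mmat N orig tm) (4 * N) (2 * N) a) | z a.
       z \<in> Sigma_set N orig tm \<and> length a = 2 * N \<and>
       matvec (Umat N orig tm z) (2 * N) (2 * N) a = a}"
proof (intro equalityI subsetI)
  fix p assume pT: "p \<in> Tset N orig tm"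
  then obtain l k f f' where p: "p = (expikl N k l, trk N l k f f')" and lpos: "\<forall>j<N. l j > 0"
    and k: "k \<ge> 0" and ef: "is_eigfun N orig tm l k f f'"
    unfolding Tset_def by blast
  have zS: "expikl N k l \<in> Sigma_set N orig tm"
    unfolding Sigma_set_def using pT p by (metis fst_conv image_eqI)
  have "\<exists>a. length a = 2 * N \<and> matvec (Umat N orig tm (expikl N k l)) (2 * N) (2 * N) a = a \<and>
     matvec (Mmat N orig tm) (4 * N) (2 * N) a = trk N l k f f'"
  proof (cases "k = 0")
    case True
    then show ?thesis using fwd_zero[OF lpos] ef by simp
  next
    case False
    then show ?thesis using fwd_pos[OF lpos _ ef] k by simp
  qed
  then obtain a where A: "length a = 2 * N" "matvec (Umat N orig tm (expikl N k l)) (2 * N) (2 * N) a = a"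
     "matvec (Mmat N orig tm) (4 * N) (2 * N) a = trk N l k f f'" by blast
  then show "p \<in> {(z, matvec (Mmat N orig tm) (4 * N) (2 * N) a) | z a.
       z \<in> Sigma_set N orig tm \<and> length a = 2 * N \<and>
       matvec (Umat N orig tm z) (2 * N) (2 * N) a = a}"
    unfolding p
    by (intro CollectI exI[of _ "expikl N k l"] exI[of _ a] conjI) (use A zS in simp_all)
next
  fix p assume "p \<in> {(z, matvec (Mmat N orig tm) (4 * N) (2 * N) a) | z a.
       z \<in> Sigma_set N orig tm \<and> length a = 2 * N \<and>
       matvec (Umat N orig tm z) (2 * N) (2 * N) a = a}"
  then obtain z a where p: "p = (z, matvec (Mmat N orig tm) (4 * N) (2 * N) a)" and zS: "z \<in> Sigma_set N orig tm"
    and len: "length a = 2 * N" and U: "matvec (Umat N orig tm z) (2 * N) (2 * N) a = a" by blast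
  from zS obtain q where q: "q \<in> Tset N orig tm" and zq: "z = fst q"
    unfolding Sigma_set_def by blast
  from q obtain l0 k0 f0 f0' where q': "q = (expikl N k0 l0, trk N l0 k0 f0 f0')" and l0: "\<forall>j<N. l0 j > 0" and k0: "k0 \<ge> 0"
    and ev0: "is_eigval N orig tm l0 k0"
    unfolding Tset_def by blast
  have z: "z = expikl N k0 l0" using zq q' by simp
  show "p \<in> Tset N orig tm"
  proof (cases "\<exists>c<2*N. a ! c \<noteq> 0")
    case False
    then have a0: "a ! c = 0" if "c < 2 * N" for c using that by blast
    have Sa0: "Sa N orig tm a r = 0" for r unfolding Sa_def by (simp add: a0)
    have a0': "a ! j = 0" "a ! (N + j) = 0" if "j < N" for j using that a0 by auto
    have tr: "matvec (Mmat N orig tm) (4 * N) (2 * N) a = trk N l0 k0 (\<lambda>_ _. 0) (\<lambda>_ _. 0)"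
      by (rule eq_trk) (simp_all add: Sa0 a0')
    have ef: "is_eigfun N orig tm l0 k0 (\<lambda>_ _. 0) (\<lambda>_ _. 0)"
      unfolding is_eigfun_def by (auto intro: has_vector_derivative_const[THEN has_vector_derivative_eq_rhs])
    show ?thesis unfolding p z tr Tset_def
      by (intro CollectI exI[of _ l0] exI[of _ k0] exI[of _ "\<lambda>_ _. 0"] exI[of _ "\<lambda>_ _. 0"] conjI refl l0 k0 ev0 ef)
  next
    case True
    obtain k1 l1 where k1: "k1 > 0" and l1: "\<forall>j<N. l1 j > 0" and z1: "z = expikl N k1 l1"
    proof (cases "k0 > 0")
      case True then show ?thesis using that l0 z by blast
    next
      case False
      then have "k0 = 0" using k0 by simp
      then have "z = expikl N 1 (\<lambda>_. 2 * pi)" unfolding z expikl_def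
        by (simp add: exp_two_pi_i' mult.commute)
      then show ?thesis using that[of 1 "\<lambda>_. 2 * pi"] by simp
    qed
    obtain f f' where ef: "is_eigfun N orig tm l1 k1 f f'" and tr: "matvec (Mmat N orig tm) (4 * N) (2 * N) a = trk N l1 k1 f f'"
      and ev: "is_eigval N orig tm l1 k1"
      using rev_pos[OF l1 k1 len U[unfolded z1]] True by blast
    show ?thesis unfolding p z1 tr Tset_def
      by (intro CollectI exI[of _ l1] exI[of _ k1] exI[of _ f] exI[of _ f'] conjI refl l1 ev ef) (use k1 in simp)
  qed
qed


end
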